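(* For every $\delta<\frac{1}{2e^4}$, every $T>0$ and every $\Delta>0$, there exists an ergodic MDP $\mathcal{M}$ with $S=3$ states, $A=2$ actions and optimal bias span $H=1/2$ such that any algorithm that computes a $\Delta$-tight upper bound for the optimal bias span with probability $1-\delta$, using a generative model, uses in expectation more than $T$ samples when run on $\mathcal{M}$.
   Context: A (finite) MDP is a tuple $(\mathcal{S},\mathcal{A},P,r)$ with $|\mathcal{S}|=S$, $|\mathcal{A}|=A$, transition kernel $P$ (with $p_{s,a}$ the distribution of the next state from $(s,a)$) and reward distributions $r(s,a)$ supported in $[0,1]$ with mean $\bar r_{s,a}$. An MDP is ergodic if for every stationary deterministic policy and every pair of states $s,s'$ the expected hitting time of $s'$ from $s$ is finite. For a stationary policy $\pi$, the gain is $g_\pi(s)=\lim_{T\to\infty}\frac1T\mathbb{E}_\pi[\sum_{t=0}^{T-1}r_t\mid s_0=s]$. In such an MDP the optimal gain $g^\star$ is a constant and there is a vector $b^\star\in\mathbb{R}^S$ (unique up to an additive constant) with $g^\star+b^\star(s)=\max_a\{\bar r_{s,a}+p_{s,a}b^\star\}$ for all $s$, namely the bias vector $b_\pi=\sum_{t\ge1}(P_\pi^{t-1}-\bar P_\pi)\bar r_\pi$ of the optimal policy, where $\bar P_\pi=\lim_T\frac1T\sum_{t=1}^TP_\pi^{t-1}$. The optimal bias span is $H=\max_s b^\star(s)-\min_s b^\star(s)$. A generative model allows the algorithm, at each step, to choose any pair $(s,a)$ and observe an independent reward sample $r\sim r(s,a)$ and next state $s'\sim p_{s,a}$; the number of samples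 is the number of such queries before the algorithm stops. An algorithm computes a $\Delta$-tight upper bound for the optimal bias span with probability $1-\delta$ if, on every MDP with optimal bias span $H$, it outputs $\hat H$ with $\mathbb{P}(H\le\hat H\le H+\Delta)\ge1-\delta$. *)

theory Defs
  imports "HOL-Probability.Probability"
begin

record ('s, 'a) mdp =
  trans :: "'s \<Rightarrow> 'a \<Rightarrow> 's pmf"
  rew   :: "'s \<Rightarrow> 'a \<Rightarrow> real pmf"

definition valid_mdp :: "('s, 'a) mdp \<Rightarrow> bool" where
  "valid_mdp M \<longleftrightarrow> (\<forall>s a. set_pmf (rew M s a) \<subseteq> {0..1})"

definition mean_rew :: "('s, 'a) mdp \<Rightarrow> 's \<Rightarrow> 'a \<Rightarrow> real" where
  "mean_rew M s a = measure_pmf.expectation (rew M s a) (\<lambda>x. x)"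

(* Probability that the Markov chain of the stationary deterministic policy pol,
   started in x, has not visited the target state t at times 0,...,n. *)
fun avoid_prob :: "('s::finite, 'a) mdp \<Rightarrow> ('s \<Rightarrow> 'a) \<Rightarrow> 's \<Rightarrow> nat \<Rightarrow> 's \<Rightarrow> real" where
  "avoid_prob M pol t 0 x = (if x = t then 0 else 1)"
| "avoid_prob M pol t (Suc n) x =
     (if x = t then 0 else (\<Sum>y\<in>UNIV. pmf (trans M x (pol x)) y * avoid_prob M pol t n y))"

(* Expected hitting time E[tau] of t from s, tau = min {n. s_n = t}, via E[tau] = \<Sum>_n P(tau > n). *)
definition expected_hitting_time :: "('s::finite, 'a) mdp \<Rightarrow> ('s \<Rightarrow> 'a) \<Rightarrow> 's \<Rightarrow> 's \<Rightarrow> ennreal" where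
  "expected_hitting_time M pol s t = (\<Sum>n. ennreal (avoid_prob M pol t n s))"

definition ergodic :: "('s::finite, 'a) mdp \<Rightarrow> bool" where
  "ergodic M \<longleftrightarrow> (\<forall>pol s t. expected_hitting_time M pol s t < \<infinity>)"

definition optimality_eq :: "('s::finite, 'a::finite) mdp \<Rightarrow> real \<Rightarrow> ('s \<Rightarrow> real) \<Rightarrow> bool" where
  "optimality_eq M g b \<longleftrightarrow>
     (\<forall>s. g + b s = Max (range (\<lambda>a. mean_rew M s a + (\<Sum>s'\<in>UNIV. pmf (trans M s a) s' * b s'))))"

definition span :: "('s::finite \<Rightarrow> real) \<Rightarrow> real" where
  "span b = Max (range b) - Min (range b)"

(* optimal bias span H = max b* - min b*, where b* is the (up to constants unique) solution *)
definition opt_bias_span :: "('s::finite, 'a::finite) mdp \<Rightarrow> real" where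
  "opt_bias_span M = (THE h. \<exists>g b. optimality_eq M g b \<and> h = span b)"

type_synonym ('s, 'a) history = "('s \<times> 'a \<times> real \<times> 's) list"

datatype ('s, 'a) decision = Query 's 'a | Stop real

type_synonym ('s, 'a) algorithm = "('s, 'a) history \<Rightarrow> ('s, 'a) decision pmf"

datatype ('s, 'a) config = Running "('s, 'a) history" | Done "('s, 'a) history" real

fun step_conf :: "('s, 'a) mdp \<Rightarrow> ('s, 'a) algorithm \<Rightarrow> ('s, 'a) config \<Rightarrow> ('s, 'a) config pmf" where
  "step_conf M alg (Running h) =
     bind_pmf (alg h) (\<lambda>d. case d of
        Stop x \<Rightarrow> return_pmf (Done h x)
      | Query s a \<Rightarrow> bind_pmf (rew M s a) (\<lambda>r. bind_pmf (trans M s a)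
                       (\<lambda>s'. return_pmf (Running (h @ [(s, a, r, s')])))))"
| "step_conf M alg (Done h x) = return_pmf (Done h x)"

fun run :: "('s, 'a) mdp \<Rightarrow> ('s, 'a) algorithm \<Rightarrow> nat \<Rightarrow> ('s, 'a) config pmf" where
  "run M alg 0 = return_pmf (Running [])"
| "run M alg (Suc n) = bind_pmf (run M alg n) (step_conf M alg)"

fun is_running :: "('s, 'a) config \<Rightarrow> bool" where
  "is_running (Running _) = True"
| "is_running (Done _ _) = False"

(* The number N of samples satisfies N > n iff the algorithm is still running after n+1 steps.
   Expected number of samples E[N] = \<Sum>_n P(N > n) (= \<infinity> if the algorithm may not stop). *)
definition expected_samples :: "('s, 'a) mdp \<Rightarrow> ('s, 'a) algorithm \<Rightarrow> ennreal" where
  "expected_samples M alg = (\<Sum>n. ennreal (measure_pmf.prob (run M alg (Suc n)) {c. is_running c}))"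

definition output_prob :: "('s, 'a) mdp \<Rightarrow> ('s, 'a) algorithm \<Rightarrow> real set \<Rightarrow> real" where
  "output_prob M alg I = (SUP n. measure_pmf.prob (run M alg n) {c. \<exists>h x. c = Done h x \<and> x \<in> I})"

definition tight_bound_alg :: "real \<Rightarrow> real \<Rightarrow> ('s::finite, 'a::finite) algorithm \<Rightarrow> bool" where
  "tight_bound_alg \<delta> \<Delta> alg \<longleftrightarrow>
     (\<forall>M :: ('s, 'a) mdp. valid_mdp M \<and> ergodic M \<longrightarrow>
        output_prob M alg {opt_bias_span M .. opt_bias_span M + \<Delta>} \<ge> 1 - \<delta>)"

end

theory Submission
  imports Defs
begin


fun iterk :: "('s, 'a) mdp \<Rightarrow> ('s, 'a) algorithm \<Rightarrow> nat \<Rightarrow> ('s, 'a) config \<Rightarrow> ('s, 'a) config pmf" where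
  "iterk M alg 0 c = return_pmf c"
| "iterk M alg (Suc j) c = bind_pmf (iterk M alg j c) (step_conf M alg)"

lemma iterk_Done: "iterk M alg j (Done h x) = return_pmf (Done h x)"
  by (induction j) (auto simp: bind_return_pmf)

lemma run_add: "run M alg (n + j) = bind_pmf (run M alg n) (iterk M alg j)"
proof (induction j)
  case 0 then show ?case by (simp add: bind_return_pmf')
next
  case (Suc j) then show ?case by (simp add: bind_assoc_pmf)
qed

lemma prob_bind_le:
  assumes "\<And>c. c \<in> set_pmf p \<Longrightarrow> measure_pmf.prob (f c) A \<le> g c"
    and "\<And>c. 0 \<le> g c" "\<And>c. g c \<le> 1"
  shows "measure_pmf.prob (bind_pmf p f) A \<le> measure_pmf.expectation p g"
proof -
  have "ennreal (measure_pmf.prob (bind_pmf p f) A) = emeasure (bind_pmf p f) A"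
    by (simp add: measure_pmf.emeasure_eq_measure)
  also have "\<dots> = (\<integral>\<^sup>+c. emeasure (f c) A \<partial>p)" by simp
  also have "\<dots> \<le> (\<integral>\<^sup>+c. ennreal (g c) \<partial>p)"
    by (rule nn_integral_mono_AE) (auto simp: AE_measure_pmf_iff measure_pmf.emeasure_eq_measure assms(1,2) ennreal_le_iff)
  also have "\<dots> = ennreal (measure_pmf.expectation p g)"
    by (rule nn_integral_eq_integral) (auto intro!: measure_pmf.integrable_const_bound[where B=1] simp: assms)
  finally have "ennreal (measure_pmf.prob (bind_pmf p f) A) \<le> ennreal (measure_pmf.expectation p g)" .
  moreover have "0 \<le> measure_pmf.expectation p g" by (simp add: assms(2) integral_nonneg_AE)
  ultimately show ?thesis by (simp add: ennreal_le_iff)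
qed

lemma prob_bind_ge:
  assumes "\<And>c. c \<in> set_pmf p \<Longrightarrow> measure_pmf.prob (f c) A \<ge> g c"
    and "\<And>c. 0 \<le> g c" "\<And>c. g c \<le> 1"
  shows "measure_pmf.prob (bind_pmf p f) A \<ge> measure_pmf.expectation p g"
proof -
  have "ennreal (measure_pmf.expectation p g) = (\<integral>\<^sup>+c. ennreal (g c) \<partial>p)"
    by (rule nn_integral_eq_integral[symmetric]) (auto intro!: measure_pmf.integrable_const_bound[where B=1] simp: assms)
  also have "\<dots> \<le> (\<integral>\<^sup>+c. emeasure (f c) A \<partial>p)"
    by (rule nn_integral_mono_AE) (auto simp: AE_measure_pmf_iff measure_pmf.emeasure_eq_measure assms(1,2) ennreal_le_iff)
  also have "\<dots> = emeasure (bind_pmf p f) A" by simp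
  also have "\<dots> = ennreal (measure_pmf.prob (bind_pmf p f) A)"
    by (simp add: measure_pmf.emeasure_eq_measure)
  finally have "ennreal (measure_pmf.expectation p g) \<le> ennreal (measure_pmf.prob (bind_pmf p f) A)" .
  then show ?thesis by (simp add: ennreal_le_iff)
qed

definition Rn :: "('s, 'a) config set" where "Rn = {c. is_running c}"

lemma prob_return_ind: "measure_pmf.prob (return_pmf c) E = indicator E c"
  by (simp add: measure_return)

lemma exp_ind: "measure_pmf.expectation p (indicator E) = measure_pmf.prob p E"
  by simp

lemma exp_ind2: "E \<inter> F = {} \<Longrightarrow> measure_pmf.expectation p (\<lambda>c. indicator E c + indicator F c) = measure_pmf.prob p E + measure_pmf.prob p F"
  by (subst Bochner_Integration.integral_add) (auto intro!: measure_pmf.integrable_const_bound[where B=1])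

lemma running_anti: "measure_pmf.prob (run M alg (n + j)) Rn \<le> measure_pmf.prob (run M alg n) Rn"
proof -
  have "measure_pmf.prob (run M alg (n + j)) Rn \<le> measure_pmf.expectation (run M alg n) (indicator Rn)"
    unfolding run_add
  proof (rule prob_bind_le)
    fix c show "measure_pmf.prob (iterk M alg j c) Rn \<le> indicator Rn c"
      by (cases c) (auto simp: iterk_Done prob_return_ind Rn_def)
  qed auto
  then show ?thesis by simp
qed

lemma done_upper:
  assumes "E \<inter> Rn = {}"
  shows "measure_pmf.prob (run M alg (n + j)) E \<le> measure_pmf.prob (run M alg n) E + measure_pmf.prob (run M alg n) Rn"
proof -
  have "measure_pmf.prob (run M alg (n + j)) E \<le> measure_pmf.expectation (run M alg n) (\<lambda>c. indicator E c + indicator Rn c)"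
    unfolding run_add
  proof (rule prob_bind_le)
    fix c show "measure_pmf.prob (iterk M alg j c) E \<le> indicator E c + indicator Rn c"
      using assms by (cases c) (auto simp: iterk_Done prob_return_ind Rn_def indicator_def)
  next
    fix c show "0 \<le> (indicator E c + indicator Rn c :: real)" by auto
    show "(indicator E c + indicator Rn c :: real) \<le> 1" using assms by (auto simp: indicator_def)
  qed
  then show ?thesis using exp_ind2[OF assms] by simp
qed

lemma done_lower:
  assumes "E \<inter> Rn = {}"
  shows "measure_pmf.prob (run M alg n) E \<le> measure_pmf.prob (run M alg (n + j)) E"
proof -
  have "measure_pmf.expectation (run M alg n) (indicator E) \<le> measure_pmf.prob (run M alg (n + j)) E"
    unfolding run_add
  proof (rule prob_bind_ge)
    fix c show "indicator E c \<le> measure_pmf.prob (iterk M alg j c) E"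
      using assms by (cases c) (auto simp: iterk_Done prob_return_ind Rn_def indicator_def)
  qed auto
  then show ?thesis by simp
qed

lemma bind_ge_f:
  assumes "\<And>x. pmf (f' x) c \<ge> k * pmf (f x) c" "0 \<le> k"
  shows "pmf (bind_pmf p f') c \<ge> k * pmf (bind_pmf p f) c"
proof -
  have "k * pmf (bind_pmf p f) c = (\<integral>x. k * pmf (f x) c \<partial>measure_pmf p)"
    by (simp add: pmf_bind)
  also have "\<dots> \<le> (\<integral>x. pmf (f' x) c \<partial>measure_pmf p)"
    by (rule integral_mono) (auto intro!: Bochner_Integration.integrable_mult_right measure_pmf.integrable_const_bound[where B=1]
        simp: assms pmf_le_1 mult_le_cancel_left1)
  also have "\<dots> = pmf (bind_pmf p f') c" by (simp add: pmf_bind)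
  finally show ?thesis .
qed

lemma bind_ge_p:
  assumes "\<And>x. pmf p' x \<ge> k * pmf p x" "0 \<le> k"
  shows "pmf (bind_pmf p' f) c \<ge> k * pmf (bind_pmf p f) c"
proof -
  have "ennreal (k * pmf (bind_pmf p f) c) = ennreal k * (\<integral>\<^sup>+x. ennreal (pmf p x) * ennreal (pmf (f x) c) \<partial>count_space UNIV)"
    by (simp add: ennreal_pmf_bind nn_integral_measure_pmf ennreal_mult assms(2))
  also have "\<dots> = (\<integral>\<^sup>+x. ennreal (k * pmf p x) * ennreal (pmf (f x) c) \<partial>count_space UNIV)"
    by (subst nn_integral_cmult[symmetric]) (auto simp: ennreal_mult assms(2) mult.assoc)
  also have "\<dots> \<le> (\<integral>\<^sup>+x. ennreal (pmf p' x) * ennreal (pmf (f x) c) \<partial>count_space UNIV)"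
    by (intro nn_integral_mono mult_right_mono ennreal_leI assms(1)) auto
  also have "\<dots> = ennreal (pmf (bind_pmf p' f) c)"
    by (simp add: ennreal_pmf_bind nn_integral_measure_pmf)
  finally show ?thesis by (simp add: ennreal_le_iff)
qed

lemma step_ge:
  assumes "trans M' = trans M" "\<And>s a r. pmf (rew M' s a) r \<ge> k * pmf (rew M s a) r" "0 \<le> k" "k \<le> 1"
  shows "pmf (step_conf M' alg c0) c \<ge> k * pmf (step_conf M alg c0) c"
proof (cases c0)
  case (Running h)
  show ?thesis unfolding Running step_conf.simps
  proof (rule bind_ge_f[OF _ assms(3)])
    fix d show "k * pmf (case d of Stop x \<Rightarrow> return_pmf (Done h x)
      | Query s a \<Rightarrow> bind_pmf (rew M s a) (\<lambda>r. bind_pmf (trans M s a) (\<lambda>s'. return_pmf (Running (h @ [(s, a, r, s')])))))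
      c \<le> pmf (case d of Stop x \<Rightarrow> return_pmf (Done h x)
      | Query s a \<Rightarrow> bind_pmf (rew M' s a) (\<lambda>r. bind_pmf (trans M' s a) (\<lambda>s'. return_pmf (Running (h @ [(s, a, r, s')])))))
      c"
    proof (cases d)
      case (Query s a) then show ?thesis
        using bind_ge_p[OF assms(2) assms(3)] assms(1) by simp
    next
      case (Stop x) then show ?thesis using assms(3,4) by (simp add: mult_left_le_one_le)
    qed
  qed
next
  case (Done h x) then show ?thesis using assms(3,4) by (simp add: mult_left_le_one_le)
qed

lemma run_ge:
  assumes "trans M' = trans M" "\<And>s a r. pmf (rew M' s a) r \<ge> k * pmf (rew M s a) r" "0 \<le> k" "k \<le> 1"
  shows "pmf (run M' alg n) c \<ge> k ^ n * pmf (run M alg n) c"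
proof (induction n arbitrary: c)
  case 0 then show ?case by simp
next
  case (Suc n)
  have "k ^ Suc n * pmf (run M alg (Suc n)) c = k ^ n * (k * pmf (bind_pmf (run M alg n) (step_conf M alg)) c)"
    by simp
  also have "\<dots> \<le> k ^ n * pmf (bind_pmf (run M alg n) (step_conf M' alg)) c"
    by (intro mult_left_mono bind_ge_f step_ge[OF assms]) (auto simp: assms)
  also have "\<dots> \<le> pmf (bind_pmf (run M' alg n) (step_conf M' alg)) c"
    by (rule bind_ge_p) (auto simp: Suc assms)
  finally show ?case by simp
qed

lemma prob_ge:
  assumes "\<And>c. pmf q c \<ge> k * pmf p c" "0 \<le> k"
  shows "measure_pmf.prob q E \<ge> k * measure_pmf.prob p E"
proof -
  have "ennreal (k * measure_pmf.prob p E) = ennreal k * (\<integral>\<^sup>+x. ennreal (pmf p x) \<partial>count_space E)"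
    by (simp add: nn_integral_pmf measure_pmf.emeasure_eq_measure ennreal_mult assms(2))
  also have "\<dots> = (\<integral>\<^sup>+x. ennreal (k * pmf p x) \<partial>count_space E)"
    by (subst nn_integral_cmult[symmetric]) (auto simp: ennreal_mult assms(2))
  also have "\<dots> \<le> (\<integral>\<^sup>+x. ennreal (pmf q x) \<partial>count_space E)"
    by (intro nn_integral_mono ennreal_leI assms(1))
  also have "\<dots> = ennreal (measure_pmf.prob q E)"
    by (simp add: nn_integral_pmf measure_pmf.emeasure_eq_measure)
  finally show ?thesis by (simp add: ennreal_le_iff)
qed


definition EvI :: "real set \<Rightarrow> ('s, 'a) config set" where
  "EvI I = {c. \<exists>h x. c = Done h x \<and> x \<in> I}"

lemma EvI_Rn: "EvI I \<inter> Rn = {}" by (auto simp: EvI_def Rn_def)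

lemma EvI_disj: "I \<inter> J = {} \<Longrightarrow> EvI I \<inter> EvI J = {}" by (auto simp: EvI_def)

lemma samples_bound:
  assumes "expected_samples M alg \<le> ennreal T" "K > 0" "0 \<le> T"
  shows "real K * measure_pmf.prob (run M alg K) Rn \<le> T"
proof -
  let ?p = "\<lambda>n. measure_pmf.prob (run M alg n) Rn"
  have "ennreal (real K * ?p K) = (\<Sum>n<K. ennreal (?p K))"
    by (simp add: ennreal_mult' ennreal_of_nat_eq_real_of_nat)
  also have "\<dots> \<le> (\<Sum>n<K. ennreal (?p (Suc n)))"
  proof (rule sum_mono)
    fix n assume "n \<in> {..<K}"
    then have "K = Suc n + (K - Suc n)" by simp
    then have "?p K \<le> ?p (Suc n)" using running_anti[of M alg "Suc n" "K - Suc n"] by metis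
    then show "ennreal (?p K) \<le> ennreal (?p (Suc n))" by (rule ennreal_leI)
  qed
  also have "\<dots> \<le> (\<Sum>n. ennreal (?p (Suc n)))"
    by (rule sum_le_suminf) auto
  also have "\<dots> \<le> ennreal T" using assms(1) by (simp add: expected_samples_def Rn_def)
  finally have "ennreal (real K * ?p K) \<le> ennreal T" .
  then show ?thesis using assms(3) by (simp add: ennreal_le_iff)
qed

lemma output_prob_le:
  assumes "\<And>n. measure_pmf.prob (run M alg n) (EvI I) \<le> B"
  shows "output_prob M alg I \<le> B"
  unfolding output_prob_def using assms by (intro cSUP_least) (auto simp: EvI_def)

lemma core:
  assumes o1: "output_prob M alg I \<ge> 1 - \<delta>" and o2: "output_prob M' alg I' \<ge> 1 - \<delta>"
    and disj: "I \<inter> I' = {}" and tr: "trans M' = trans M"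
    and rw: "\<And>s a r. pmf (rew M' s a) r \<ge> (1 - \<epsilon>) * pmf (rew M s a) r"
    and e: "0 \<le> \<epsilon>" "\<epsilon> \<le> 1" and K: "K > 0"
    and sb: "real K * measure_pmf.prob (run M alg K) Rn \<le> T"
  shows "(1 - \<epsilon>) ^ K * (1 - \<delta> - T / K) \<le> \<delta>"
proof -
  let ?P = "\<lambda>N n E. measure_pmf.prob (run N alg n) E"
  have rK: "?P M K Rn \<le> T / K" using sb K by (simp add: field_simps)
  have "\<And>n. ?P M n (EvI I) \<le> ?P M K (EvI I) + ?P M K Rn"
  proof -
    fix n show "?P M n (EvI I) \<le> ?P M K (EvI I) + ?P M K Rn"
    proof (cases "K \<le> n")
      case True
      then have "n = K + (n - K)" by simp
      then show ?thesis using done_upper[where E="EvI I" and M=M and alg=alg and n=K and j="n - K", OF EvI_Rn] by metis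
    next
      case False
      then have "K = n + (K - n)" by simp
      then have "?P M n (EvI I) \<le> ?P M K (EvI I)" using done_lower[where E="EvI I" and M=M and alg=alg and n=n and j="K - n", OF EvI_Rn] by metis
      then show ?thesis by (simp add: add_increasing2)
    qed
  qed
  then have "output_prob M alg I \<le> ?P M K (EvI I) + ?P M K Rn" by (rule output_prob_le)
  then have A: "?P M K (EvI I) \<ge> 1 - \<delta> - T / K" using o1 rK by linarith
  have B: "?P M' K (EvI I) \<ge> (1 - \<epsilon>) ^ K * ?P M K (EvI I)"
    by (rule prob_ge[OF run_ge[OF tr rw]]) (use e in auto)
  have "\<And>n. ?P M' n (EvI I') \<le> 1 - ?P M' K (EvI I)"
  proof -
    fix n
    have U: "\<And>m. ?P M' m (EvI I') + ?P M' m (EvI I) \<le> 1"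
    proof -
      fix m
      have "?P M' m (EvI I' \<union> EvI I) = ?P M' m (EvI I') + ?P M' m (EvI I)"
        by (rule measure_pmf.finite_measure_Union) (use EvI_disj[OF disj] in auto)
      then show "?P M' m (EvI I') + ?P M' m (EvI I) \<le> 1" by (metis measure_pmf.prob_le_1)
    qed
    show "?P M' n (EvI I') \<le> 1 - ?P M' K (EvI I)"
    proof (cases "K \<le> n")
      case True
      then have "n = K + (n - K)" by simp
      then have "?P M' K (EvI I) \<le> ?P M' n (EvI I)" using done_lower[where E="EvI I" and M=M' and alg=alg and n=K and j="n - K", OF EvI_Rn] by metis
      then show ?thesis using U[of n] by linarith
    next
      case False
      then have "K = n + (K - n)" by simp
      then have "?P M' n (EvI I') \<le> ?P M' K (EvI I')" using done_lower[where E="EvI I'" and M=M' and alg=alg and n=n and j="K - n", OF EvI_Rn] by metis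
      then show ?thesis using U[of K] by linarith
    qed
  qed
  then have "output_prob M' alg I' \<le> 1 - ?P M' K (EvI I)" by (rule output_prob_le)
  then have "?P M' K (EvI I) \<le> \<delta>" using o2 by linarith
  moreover have "(1 - \<epsilon>) ^ K * (1 - \<delta> - T / K) \<le> (1 - \<epsilon>) ^ K * ?P M K (EvI I)"
    using A e by (intro mult_left_mono) auto
  ultimately show ?thesis using B by linarith
qed



lemma avoid_t: "avoid_prob M pol t n t = 0"
  by (cases n) auto

lemma avoid_bound:
  fixes M :: "('s::finite, 'a) mdp"
  assumes "\<And>s a. pmf (trans M s a) t \<ge> m"
  shows "0 \<le> avoid_prob M pol t n s \<and> avoid_prob M pol t n s \<le> (1 - m) ^ n"
proof (induction n arbitrary: s)
  case 0 then show ?case by auto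
next
  case (Suc n)
  have m1: "m \<le> 1" using assms[of s "pol s"] pmf_le_1[of "mdp.trans M s (pol s)" t] by linarith
  show ?case
  proof (cases "s = t")
    case True then show ?thesis using m1 by simp
  next
    case False
    let ?p = "pmf (trans M s (pol s))"
    have "(\<Sum>y\<in>UNIV. ?p y * avoid_prob M pol t n y) \<le> (\<Sum>y\<in>UNIV. ?p y * (if y = t then 0 else (1 - m) ^ n))"
    proof (rule sum_mono)
      fix y
      show "?p y * avoid_prob M pol t n y \<le> ?p y * (if y = t then 0 else (1 - m) ^ n)"
      proof (cases "y = t")
        case True then show ?thesis by (simp add: avoid_t)
      next
        case False then show ?thesis using Suc.IH[of y] by (simp add: mult_left_mono)
      qed
    qed
    also have "\<dots> = (\<Sum>y\<in>UNIV. ?p y * (1 - m) ^ n - (if y = t then ?p t * (1 - m) ^ n else 0))"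
      by (rule sum.cong) auto
    also have "\<dots> = (\<Sum>y\<in>UNIV. ?p y * (1 - m) ^ n) - ?p t * (1 - m) ^ n"
      by (simp add: sum_subtractf)
    also have "\<dots> = (1 - ?p t) * (1 - m) ^ n"
    proof -
      have "(\<Sum>y\<in>UNIV. ?p y) = 1" by (rule sum_pmf_eq_1) auto
      then show ?thesis by (simp add: sum_distrib_left[symmetric] algebra_simps)
    qed
    also have "\<dots> \<le> (1 - m) * (1 - m) ^ n"
      using assms[of s "pol s"] m1 by (intro mult_right_mono) auto
    finally have up: "(\<Sum>y\<in>UNIV. ?p y * avoid_prob M pol t n y) \<le> (1 - m) ^ Suc n" by simp
    have "0 \<le> (\<Sum>y\<in>UNIV. ?p y * avoid_prob M pol t n y)"
      by (intro sum_nonneg mult_nonneg_nonneg) (use Suc.IH in auto)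
    with up False show ?thesis by simp
  qed
qed

lemma ergodic_min:
  fixes M :: "('s::finite, 'a) mdp"
  assumes "0 < m" "\<And>s a t. pmf (trans M s a) t \<ge> m"
  shows "ergodic M"
  unfolding ergodic_def expected_hitting_time_def
proof (intro allI)
  fix pol s t
  have m1: "m \<le> 1" using assms(2)[of s "pol s" t] pmf_le_1[of "mdp.trans M s (pol s)" t] by linarith
  have sg: "summable (\<lambda>n. (1 - m) ^ n)" using assms(1) m1 by (intro summable_geometric) auto
  have "(\<Sum>n. ennreal (avoid_prob M pol t n s)) \<le> (\<Sum>n. ennreal ((1 - m) ^ n))"
    using avoid_bound[where M=M and t=t and m=m and pol=pol] assms(2) by (intro suminf_le ennreal_leI) auto
  also have "\<dots> = ennreal (\<Sum>n. (1 - m) ^ n)"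
    using sg m1 by (intro suminf_ennreal2) auto
  finally show "(\<Sum>n. ennreal (avoid_prob M pol t n s)) < \<infinity>"
    using order.strict_trans1 by fastforce
qed



definition wP :: "'s \<Rightarrow> real \<Rightarrow> 's \<Rightarrow> 's \<Rightarrow> real" where
  "wP y \<eta> s t = (if s = y then 1/3 else if t = s then 1 - 2*\<eta> else \<eta>)"

definition P3 :: "'s \<Rightarrow> real \<Rightarrow> 's \<Rightarrow> 's pmf" where
  "P3 y \<eta> s = embed_pmf (wP y \<eta> s)"

definition MK :: "'s \<Rightarrow> 's \<Rightarrow> real \<Rightarrow> real \<Rightarrow> real pmf \<Rightarrow> ('s, 'a) mdp" where
  "MK x y \<eta> c R = \<lparr>trans = (\<lambda>s a. P3 y \<eta> s),
     rew = (\<lambda>s a. if s = x then R else if s = y then return_pmf c else return_pmf 0)\<rparr>"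

lemma sum3:
  assumes "x \<noteq> y" "y \<noteq> z" "x \<noteq> z" "UNIV = {x, y, z}"
  shows "(\<Sum>t\<in>UNIV. f t) = f x + f y + f z"
proof -
  have "(\<Sum>t\<in>UNIV. f t) = (\<Sum>t\<in>{x,y,z}. f t)" by (simp only: assms(4))
  then show ?thesis using assms(1-3) by (simp add: add.assoc)
qed

lemma pmf_P3:
  fixes x y z :: "'s::finite"
  assumes "x \<noteq> y" "y \<noteq> z" "x \<noteq> z" "UNIV = {x, y, z}" "0 \<le> \<eta>" "\<eta> \<le> 1/4"
  shows "pmf (P3 y \<eta> s) t = wP y \<eta> s t"
  unfolding P3_def
proof (rule pmf_embed_pmf)
  fix t show "0 \<le> wP y \<eta> s t" using assms by (auto simp: wP_def)
next
  have "s = x \<or> s = y \<or> s = z" using assms(4) by auto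
  then have "(\<Sum>t\<in>UNIV. wP y \<eta> s t) = 1"
    using assms by (subst sum3[OF assms(1-4)]) (auto simp: wP_def)
  then show "(\<integral>\<^sup>+ t. ennreal (wP y \<eta> s t) \<partial>count_space UNIV) = 1"
    using assms by (subst nn_integral_count_space_finite) (auto simp: sum_ennreal wP_def)
qed

lemma MK_opt:
  fixes x y z :: "'s::finite"
  assumes "x \<noteq> y" "y \<noteq> z" "x \<noteq> z" "UNIV = {x, y, z}" "0 \<le> \<eta>" "\<eta> \<le> 1/4"
    and rho: "measure_pmf.expectation R (\<lambda>r. r) = \<rho>"
  shows "optimality_eq (MK x y \<eta> c R :: ('s, 'a::finite) mdp) g b \<longleftrightarrow>
    (g + b x = \<rho> + (1 - 2*\<eta>) * b x + \<eta> * b y + \<eta> * b z) \<and>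
    (g + b y = c + (b x + b y + b z) / 3) \<and>
    (g + b z = \<eta> * b x + \<eta> * b y + (1 - 2*\<eta>) * b z)" (is "_ \<longleftrightarrow> ?R")
proof -
  have mr: "mean_rew (MK x y \<eta> c R :: ('s, 'a) mdp) s a = (if s = x then \<rho> else if s = y then c else 0)" for s a
    using rho assms(1-3) by (auto simp: mean_rew_def MK_def)
  have tr: "(\<Sum>s'\<in>UNIV. pmf (trans (MK x y \<eta> c R :: ('s, 'a) mdp) s a) s' * b s') =
     wP y \<eta> s x * b x + wP y \<eta> s y * b y + wP y \<eta> s z * b z" for s a
    by (simp add: MK_def pmf_P3[OF assms(1-6)] sum3[OF assms(1-4)])
  have rng: "range (\<lambda>a::'a. v) = {v}" for v :: real by auto
  have "optimality_eq (MK x y \<eta> c R :: ('s, 'a) mdp) g b \<longleftrightarrow>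
     (\<forall>s. g + b s = (if s = x then \<rho> else if s = y then c else 0) + (wP y \<eta> s x * b x + wP y \<eta> s y * b y + wP y \<eta> s z * b z))"
    unfolding optimality_eq_def mr tr rng by simp
  also have "\<dots> \<longleftrightarrow> (\<forall>s\<in>{x,y,z}. g + b s = (if s = x then \<rho> else if s = y then c else 0) + (wP y \<eta> s x * b x + wP y \<eta> s y * b y + wP y \<eta> s z * b z))"
    using assms(4) by (metis UNIV_I)
  also have "\<dots> \<longleftrightarrow> ?R"
    using assms(1-3) by (simp add: wP_def algebra_simps add_divide_distrib)
  finally show ?thesis .
qed


lemma obs_unique:
  fixes M :: "('s::finite, 'a::finite) mdp"
  assumes "optimality_eq M g0 \<beta>" "\<And>g b. optimality_eq M g b \<Longrightarrow> \<exists>k. \<forall>s. b s = \<beta> s + k"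
  shows "opt_bias_span M = span \<beta>"
  unfolding opt_bias_span_def
proof (rule the_equality)
  show "\<exists>g b. optimality_eq M g b \<and> span \<beta> = span b" using assms(1) by blast
next
  fix h assume "\<exists>g b. optimality_eq M g b \<and> h = span b"
  then obtain g b where gb: "optimality_eq M g b" "h = span b" by blast
  obtain k where k: "\<forall>s. b s = \<beta> s + k" using assms(2)[OF gb(1)] by blast
  then have "b = (\<lambda>s. \<beta> s + k)" by auto
  then have "span b = (Max ((\<lambda>s. \<beta> s + k) ` UNIV)) - Min ((\<lambda>s. \<beta> s + k) ` UNIV)"
    by (simp add: span_def)
  also have "\<dots> = span \<beta>"
    by (simp add: Max_add_commute Min_add_commute span_def)
  finally show "h = span \<beta>" using gb by simp
qed

lemma MK_span:
  fixes x y z :: "'s::finite"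
  assumes d: "x \<noteq> y" "y \<noteq> z" "x \<noteq> z" "UNIV = {x, y, z}" and e: "0 < \<eta>" "\<eta> \<le> 1/4"
    and rho: "measure_pmf.expectation R (\<lambda>r. r) = \<rho>"
    and u: "u = \<rho> / (3 * \<eta>)" and w: "w = (c + u * (1/3 - \<eta>)) / (\<eta> + 2/3)"
  shows "opt_bias_span (MK x y \<eta> c R :: ('s, 'a::finite) mdp) = span (\<lambda>s. if s = x then u else if s = y then w else 0)"
proof -
  note opt = MK_opt[OF d(1-4) _ e(2) rho]
  let ?\<beta> = "\<lambda>s. if s = x then u else if s = y then w else 0"
  have wd: "w * (\<eta> + 2/3) = c + u * (1/3 - \<eta>)" using w e by (simp add: field_simps)
  have ud: "3 * \<eta> * u = \<rho>" using u e by simp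
  show ?thesis
  proof (rule obs_unique)
  show "optimality_eq (MK x y \<eta> c R :: ('s, 'a) mdp) (\<eta> * (u + w)) ?\<beta>"
    unfolding opt[OF order.strict_implies_order[OF e(1)]] using d(1-3) wd ud
    by (auto simp: algebra_simps add_divide_distrib)
next
  fix g b assume "optimality_eq (MK x y \<eta> c R :: ('s, 'a) mdp) g b"
  then have e1: "g + b x = \<rho> + (1 - 2*\<eta>) * b x + \<eta> * b y + \<eta> * b z"
    and e2: "g + b y = c + (b x + b y + b z) / 3"
    and e3: "g + b z = \<eta> * b x + \<eta> * b y + (1 - 2*\<eta>) * b z"
    using opt[OF order.strict_implies_order[OF e(1)]] by auto
  have "3 * \<eta> * (b x - b z) = \<rho>" using e1 e3 by (simp add: algebra_simps)
  then have "3 * \<eta> * (b x - b z) = 3 * \<eta> * u" using u e by simp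
  then have U: "b x - b z = u" using e by simp
  have "\<eta> * (b x - b z) + \<eta> * (b y - b z) + (b y - b z) = c + ((b x - b z) + (b y - b z)) / 3"
    using e2 e3 by (simp add: algebra_simps add_divide_distrib diff_divide_distrib)
  then have "(b y - b z) * (\<eta> + 2/3) = c + u * (1/3 - \<eta>)" using U by (simp add: algebra_simps add_divide_distrib diff_divide_distrib)
  then have "(b y - b z) * (\<eta> + 2/3) = w * (\<eta> + 2/3)" using wd by simp
  then have W: "b y - b z = w" using e by simp
  show "\<exists>k. \<forall>s. b s = ?\<beta> s + k"
  proof (intro exI allI)
    fix s
    have "s = x \<or> s = y \<or> s = z" using d(4) by auto
    then show "b s = ?\<beta> s + b z" using U W d(1-3) by auto
  qed
qed
qed


lemma bernoulli_ineq:
  fixes e :: real assumes "0 \<le> e" "e \<le> 1"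
  shows "(1 - e) ^ n \<ge> 1 - real n * e"
proof (induction n)
  case 0 then show ?case by simp
next
  case (Suc n)
  have "1 - real (Suc n) * e \<le> (1 - e) * (1 - real n * e)"
    using assms by (simp add: algebra_simps)
  also have "\<dots> \<le> (1 - e) * (1 - e) ^ n"
    using Suc assms by (intro mult_left_mono) auto
  finally show ?case by simp
qed

definition Rb :: "real \<Rightarrow> real pmf" where
  "Rb e = map_pmf (\<lambda>b. if b then 1 else 0) (bernoulli_pmf e)"

lemma Rb_mean: "0 \<le> e \<Longrightarrow> e \<le> 1 \<Longrightarrow> measure_pmf.expectation (Rb e) (\<lambda>r. r) = e"
  by (simp add: Rb_def)

lemma Rb_set: "set_pmf (Rb e) \<subseteq> {0..1}"
  by (auto simp: Rb_def)

lemma Rb_pmf: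
  assumes "0 \<le> e" "e \<le> 1"
  shows "pmf (Rb e) r \<ge> (1 - e) * pmf (return_pmf 0) r"
proof (cases "r = 0")
  case True
  have "pmf (Rb e) 0 = measure_pmf.prob (bernoulli_pmf e) {False}"
    unfolding Rb_def pmf_map by (rule arg_cong[where f="measure_pmf.prob _"]) auto
  also have "\<dots> = 1 - e" using assms by (simp add: measure_pmf_single)
  finally show ?thesis using True by simp
qed (simp add: indicator_def)

theorem mainTheorem1:
  fixes \<delta> T \<Delta> :: real
  assumes "CARD('s::finite) = 3" and "CARD('a::finite) = 2"
    and "\<delta> < 1 / (2 * exp 4)" and "T > 0" and "\<Delta> > 0"
  shows "\<exists>M :: ('s, 'a) mdp. valid_mdp M \<and> ergodic M \<and> opt_bias_span M = 1/2 \<and>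
           (\<forall>alg :: ('s, 'a) algorithm. tight_bound_alg \<delta> \<Delta> alg \<longrightarrow> expected_samples M alg > ennreal T)"
proof -
  obtain x y z :: 's where d: "x \<noteq> y" "y \<noteq> z" "x \<noteq> z" "UNIV = {x, y, z}"
    using assms(1) unfolding card_3_iff by metis
  define \<delta>0 where "\<delta>0 = max \<delta> 0"
  have "1 \<le> exp (4::real)" by simp
  then have h12: "1 / (2 * exp 4) \<le> (1/2 :: real)" by (simp add: field_simps)
  have "\<delta> < 1/2" using h12 assms(3) by linarith
  then have d0: "0 \<le> \<delta>0" "\<delta>0 < 1/2" unfolding \<delta>0_def by (auto simp: max_def)
  define \<gamma> where "\<gamma> = 1 - 2 * \<delta>0"
  have g: "0 < \<gamma>" "\<gamma> \<le> 1" using d0 by (auto simp: \<gamma>_def)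
  define K :: nat where "K = nat \<lceil>4 * T / \<gamma>\<rceil> + 1"
  have K0: "K > 0" by (simp add: K_def)
  have "4 * T / \<gamma> \<le> real K" unfolding K_def by linarith
  then have TK: "T / K \<le> \<gamma> / 4" using g K0 by (simp add: field_simps)
  define \<epsilon> where "\<epsilon> = \<gamma> / (4 * K)"
  have ep: "0 < \<epsilon>" "\<epsilon> \<le> 1/4" "real K * \<epsilon> = \<gamma> / 4"
    using g K0 by (auto simp: \<epsilon>_def field_simps)
  define \<eta> where "\<eta> = \<epsilon> / (3 * (\<Delta> + 1))"
  have et: "0 < \<eta>" "\<eta> \<le> 1/12" using ep assms(5) by (auto simp: \<eta>_def field_simps)
  define c where "c = 1/3 + \<eta> / 2"
  have c: "0 \<le> c" "c \<le> 1" using et by (auto simp: c_def)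
  define M :: "('s, 'a) mdp" where "M = MK x y \<eta> c (return_pmf 0)"
  define M' :: "('s, 'a) mdp" where "M' = MK x y \<eta> c (Rb \<epsilon>)"
  have et4: "\<eta> \<le> 1/4" using et by simp
  have ge_eta: "pmf (trans (MK x y \<eta> c R :: ('s, 'a) mdp) s a) t \<ge> \<eta>" for R s a t
    using et by (simp add: MK_def pmf_P3[OF d et(1)[THEN less_imp_le] et4] wP_def)
  have erg: "ergodic M" "ergodic M'"
    unfolding M_def M'_def by (rule ergodic_min[OF et(1) ge_eta])+
  have val: "valid_mdp M" "valid_mdp M'"
    using c Rb_set by (auto simp: valid_mdp_def M_def M'_def MK_def)
  have "opt_bias_span M = span (\<lambda>s. if s = x then 0 else if s = y then (c + 0 * (1/3 - \<eta>)) / (\<eta> + 2/3) else 0)"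
    unfolding M_def by (rule MK_span[OF d et(1) et4]) auto
  also have "(c + 0 * (1/3 - \<eta>)) / (\<eta> + 2/3) = 1/2" using et by (simp add: c_def field_simps)
  also have "span (\<lambda>s. if s = x then 0 else if s = y then 1/2 else (0::real)) = 1/2"
  proof -
    have "range (\<lambda>s. if s = x then 0 else if s = y then 1/2 else (0::real)) = {0, 1/2}"
      using d by auto
    then show ?thesis by (simp add: span_def)
  qed
  finally have H: "opt_bias_span M = 1/2" .
  define u where "u = \<epsilon> / (3 * \<eta>)"
  have u: "u = \<Delta> + 1" using et ep assms(5) by (simp add: u_def \<eta>_def field_simps)
  define \<beta> where "\<beta> = (\<lambda>s. if s = x then u else if s = y then (c + u * (1/3 - \<eta>)) / (\<eta> + 2/3) else 0)"
  have "opt_bias_span M' = span \<beta>"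
    unfolding M'_def \<beta>_def by (rule MK_span[OF d et(1) et4 Rb_mean u_def]) (use ep in auto)
  also have "span \<beta> \<ge> \<beta> x - \<beta> z"
    unfolding span_def by (intro diff_mono Max_ge Min_le) auto
  finally have H': "opt_bias_span M' \<ge> \<Delta> + 1" using d u by (simp add: \<beta>_def)
  have disj: "{opt_bias_span M .. opt_bias_span M + \<Delta>} \<inter> {opt_bias_span M' .. opt_bias_span M' + \<Delta>} = {}"
    using H H' by auto
  have tr: "trans M' = trans M" by (simp add: M_def M'_def MK_def)
  have rw: "pmf (rew M' s a) r \<ge> (1 - \<epsilon>) * pmf (rew M s a) r" for s a r
    using Rb_pmf[of \<epsilon> r] ep by (auto simp: M_def M'_def MK_def mult_left_le_one_le)
  show ?thesis
  proof (intro exI conjI allI impI)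
    show "valid_mdp M" "ergodic M" "opt_bias_span M = 1/2" using val erg H by auto
    fix alg :: "('s, 'a) algorithm"
    assume "tight_bound_alg \<delta> \<Delta> alg"
    then have tb: "tight_bound_alg \<delta>0 \<Delta> alg"
      unfolding tight_bound_alg_def \<delta>0_def by (smt (verit))
    have o1: "output_prob M alg {opt_bias_span M .. opt_bias_span M + \<Delta>} \<ge> 1 - \<delta>0"
      using tb val erg unfolding tight_bound_alg_def by blast
    have o2: "output_prob M' alg {opt_bias_span M' .. opt_bias_span M' + \<Delta>} \<ge> 1 - \<delta>0"
      using tb val erg unfolding tight_bound_alg_def by blast
    show "expected_samples M alg > ennreal T"
    proof (rule ccontr)
      assume "\<not> expected_samples M alg > ennreal T"
      then have "expected_samples M alg \<le> ennreal T" by (simp add: not_less)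
      then have sb: "real K * measure_pmf.prob (run M alg K) Rn \<le> T"
        by (rule samples_bound[OF _ K0]) (use assms(4) in auto)
      have key: "(1 - \<epsilon>) ^ K * (1 - \<delta>0 - T / K) \<le> \<delta>0"
        by (rule core[OF o1 o2 disj tr rw _ _ K0 sb]) (use ep in auto)
      have a: "0 \<le> 1 - \<delta>0 - T / K" "1 - \<delta>0 - T / K \<le> 1"
      proof -
        have "0 \<le> T / K" using assms(4) by simp
        have gg: "\<And>q. 0 \<le> q \<Longrightarrow> q \<le> (1 - 2 * \<delta>0) / 4 \<Longrightarrow> 0 \<le> 1 - \<delta>0 - q" using d0 by (auto simp: field_simps)
        show "0 \<le> 1 - \<delta>0 - T / K" using gg[OF \<open>0 \<le> T / K\<close>] TK unfolding \<gamma>_def by blast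
        show "1 - \<delta>0 - T / K \<le> 1" using \<open>0 \<le> T / K\<close> d0 by linarith
      qed
      have "1 - \<gamma> / 4 \<le> (1 - \<epsilon>) ^ K" using bernoulli_ineq[of \<epsilon> K] ep by simp
      then have "(1 - \<gamma> / 4) * (1 - \<delta>0 - T / K) \<le> (1 - \<epsilon>) ^ K * (1 - \<delta>0 - T / K)"
        using a by (intro mult_right_mono) auto
      moreover have "(1 - \<gamma> / 4) * (1 - \<delta>0 - T / K) \<ge> (1 - \<delta>0 - T / K) - \<gamma> / 4"
      proof -
        have h1: "\<gamma> / 4 * (1 - \<delta>0 - T / K) \<le> \<gamma> / 4" using a g by (intro mult_left_le) auto
        have h2: "(1 - \<gamma> / 4) * (1 - \<delta>0 - T / K) = (1 - \<delta>0 - T / K) - \<gamma> / 4 * (1 - \<delta>0 - T / K)"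
          by (simp add: algebra_simps)
        show ?thesis unfolding h2 using h1 by simp
      qed
      ultimately have "1 - \<delta>0 - T / K - \<gamma> / 4 \<le> \<delta>0" using key by linarith
      moreover have "\<And>q. q \<le> \<gamma> / 4 \<Longrightarrow> 1 - \<delta>0 - q - \<gamma> / 4 \<le> \<delta>0 \<Longrightarrow> False"
        using d0 by (auto simp: \<gamma>_def field_simps)
      ultimately show False using TK by blast
    qed
  qed
qed

end
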